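(* (Global context translation.) Let $\Delta$ be the global context collected from a FOOD program $P$, and $\Delta'$ the global context collected from $P'$, where $\Delta;\Gamma\vdash P\Rightarrow T\leadsto P'$. Then $\textsc{It}=\textsc{Dt}'$ and $\textsc{Dt}=\textsc{It}'$; for all $D\in\textsc{It}$, $\textsc{Dtr}(D)=\textsc{Csm}'(D)$ and $\textsc{Gen}(D)=\textsc{Ctr}'(D)$; and for all $D\in\textsc{Dt}$, $\textsc{Csm}(D)=\textsc{Dtr}'(D)$ and $\textsc{Ctr}(D)=\textsc{Gen}'(D)$. (This situation is written $\Delta\leadsto\Delta'$.)
   Context: FOOD programs consist of definitions followed by an expression. Definitions: datatypes $\texttt{data}\ D$; interfaces $\texttt{interface}\ D\{\overline{Dtr}\}$ with destructors (declarations $\texttt{def}\ f(\overline{x:T}):T$ or functions with a default body); constructors $\texttt{case}\ C(\overline{x:T})\ \texttt{extends}\ D$; generators $\texttt{class}\ C(\overline{x:T})\ \texttt{implements}\ D\{\overline{Fun}\}$; consumers $\texttt{def}\ f(\texttt{self}:D)(\overline{x:T}):T=\overline{\texttt{case}\ P\Rightarrow e}$. Global context (primes denote the context of $P'$): $\textsc{Dt}$ datatype names, $\textsc{It}$ interface names (only types selected for transformation are kept in these sets; unselected types have their associated sets emptied), $\textsc{Ctr}(D)$, $\textsc{Gen}(D)$, $\textsc{Dtr}(D)$, $\textsc{Csm}(D)$ the constructors, generators, destructors and consumers (first parameter of type $D$) of $D$. The translation $\Delta;\Gamma\vdash P\Rightarrow T\leadsto P'$: (It2Dt) each $\texttt{interface}\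 D\{\overline{Dtr}\}$ with $D\in\textsc{It}$ becomes $\texttt{data}\ D$ followed by one consumer $\texttt{def}\ f(\texttt{self}:D)(\overline{x:T}):T$ per destructor $f$, whose clauses are $\texttt{case}\ C(\overline y)\Rightarrow[\texttt{this}\mapsto\texttt{self}]e'$ for each generator $C(\overline{y:S})$ of $D$ implementing $f$ with translated body $e'$, plus $\texttt{case}\ \_\Rightarrow[\texttt{this}\mapsto\texttt{self}]e'$ for a translated default body $e'$; (Gen2Ctr) generators of $D\in\textsc{It}$ become constructors $\texttt{case}\ C(\overline{x:T})\ \texttt{extends}\ D$; (Dt2It) each $\texttt{data}\ D$ with $D\in\textsc{Dt}$ becomes $\texttt{interface}\ D$ with destructor $\texttt{def}\ f(\overline{x:T}):T$ for each consumer $f$ of $D$ (with default body $[\texttt{self}\mapsto\texttt{this}]e'$ if $f$ has a wildcard clause whose body translates to $e'$); (Ctr2Gen) constructors $C(\overline{x:T})$ of $D\in\textsc{Dt}$ become $\texttt{class}\ C(\overline{x:T})\ \texttt{implements}\ D$ with functions $\texttt{def}\ f(\overline{x:T}):T=[\texttt{self}\mapsto\texttt{this}]e'$ from the clauses $\texttt{case}\ C(\overline y)\Rightarrow e$ of the consumers; (CsmElim) consumers on transformed datatypes are removed; definitions of non-transformed types are kept, with only inner expressions translated. *)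

theory Defs
  imports Main
begin

type_synonym name = string

datatype ty = TName name

datatype exp =
    EVar name
  | EThis
  | ESelf
  | ENew name "exp list"            \<comment> \<open>constructor / generator application C(e...)\<close>
  | ECall exp name "exp list"       \<comment> \<open>consumer / destructor call e.f(e...)\<close>

type_synonym params = "(name \<times> ty) list"

datatype pat = PCtr name "name list" | PWild

datatype dtr =
    DtrDecl name params ty
  | DtrDef name params ty exp       \<comment> \<open>def f(x:T):T = e  (default body)\<close>

datatype fundef = FunDef name params ty exp

datatype def =
    DData name
  | DIface name "dtr list"
  | DCtr name params name                       \<comment> \<open>case C(x:T) extends D\<close>
  | DGen name params name "fundef list"         \<comment> \<open>class C(x:T) implements D {Fun}\<close>
  | DCsm name name params ty "(pat \<times> exp) list" \<comment> \<open>def f(self:D)(x:T):T = case P => e\<close>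

type_synonym prog = "def list \<times> exp"

fun subst_this_self :: "exp \<Rightarrow> exp" where
  "subst_this_self EThis = ESelf"
| "subst_this_self (EVar x) = EVar x"
| "subst_this_self ESelf = ESelf"
| "subst_this_self (ENew c es) = ENew c (map subst_this_self es)"
| "subst_this_self (ECall e f es) = ECall (subst_this_self e) f (map subst_this_self es)"

fun subst_self_this :: "exp \<Rightarrow> exp" where
  "subst_self_this ESelf = EThis"
| "subst_self_this (EVar x) = EVar x"
| "subst_self_this EThis = EThis"
| "subst_self_this (ENew c es) = ENew c (map subst_self_this es)"
| "subst_self_this (ECall e f es) = ECall (subst_self_this e) f (map subst_self_this es)"

record gctx =
  Dt  :: "name set"
  It  :: "name set"
  Ctr :: "name \<Rightarrow> (name \<times> params) set"
  Gen :: "name \<Rightarrow> (name \<times> params) set"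
  Dtr :: "name \<Rightarrow> (name \<times> params \<times> ty) set"
  Csm :: "name \<Rightarrow> (name \<times> params \<times> ty) set"

fun dtr_sig :: "dtr \<Rightarrow> name \<times> params \<times> ty" where
  "dtr_sig (DtrDecl f xs T) = (f, xs, T)"
| "dtr_sig (DtrDef f xs T e) = (f, xs, T)"

text \<open>Global context collected from a list of definitions; S is the set of type
  names selected for transformation. Only selected types are kept; the sets
  associated with unselected types are empty.\<close>

definition collect :: "name set \<Rightarrow> def list \<Rightarrow> gctx" where
  "collect S ds = \<lparr>
     Dt = {D \<in> S. DData D \<in> set ds},
     It = {D \<in> S. \<exists>dts. DIface D dts \<in> set ds},
     Ctr = (\<lambda>D. if D \<in> S then {(C, xs). DCtr C xs D \<in> set ds} else {}),
     Gen = (\<lambda>D. if D \<in> S then {(C, xs). \<exists>fs. DGen C xs D fs \<in> set ds} else {}),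
     Dtr = (\<lambda>D. if D \<in> S then {dtr_sig d | d dts. DIface D dts \<in> set ds \<and> d \<in> set dts} else {}),
     Csm = (\<lambda>D. if D \<in> S then {(f, xs, T). \<exists>cls. DCsm f D xs T cls \<in> set ds} else {}) \<rparr>"

section \<open>Well-formedness (guaranteed by typability of the source program)\<close>

definition wf_defs :: "def list \<Rightarrow> bool" where
  "wf_defs ds \<longleftrightarrow>
     (\<forall>D dts. \<not> (DData D \<in> set ds \<and> DIface D dts \<in> set ds)) \<and>
     (\<forall>C xs D. DCtr C xs D \<in> set ds \<longrightarrow> DData D \<in> set ds) \<and>
     (\<forall>C xs D fs. DGen C xs D fs \<in> set ds \<longrightarrow> (\<exists>dts. DIface D dts \<in> set ds)) \<and>
     (\<forall>f D xs T cls. DCsm f D xs T cls \<in> set ds \<longrightarrow> DData D \<in> set ds)"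

text \<open>The translation of inner expressions (type-directed in the paper) is kept
  abstract as a parameter tr.\<close>

definition consumers_of :: "name \<Rightarrow> def list \<Rightarrow> (name \<times> params \<times> ty \<times> (pat \<times> exp) list) list" where
  "consumers_of D ds = concat (map (\<lambda>d. case d of
       DCsm f D' xs T cls \<Rightarrow> if D' = D then [(f, xs, T, cls)] else []
     | _ \<Rightarrow> []) ds)"

definition generators_of :: "name \<Rightarrow> def list \<Rightarrow> (name \<times> params \<times> fundef list) list" where
  "generators_of D ds = concat (map (\<lambda>d. case d of
       DGen C xs D' fs \<Rightarrow> if D' = D then [(C, xs, fs)] else []
     | _ \<Rightarrow> []) ds)"

definition csm_to_dtr :: "(exp \<Rightarrow> exp) \<Rightarrow> name \<times> params \<times> ty \<times> (pat \<times> exp) list \<Rightarrow> dtr" where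
  "csm_to_dtr tr c = (case c of (f, xs, T, cls) \<Rightarrow>
     (case map snd (filter (\<lambda>pe. fst pe = PWild) cls) of
        [] \<Rightarrow> DtrDecl f xs T
      | e # _ \<Rightarrow> DtrDef f xs T (subst_self_this (tr e))))"

definition dtr_to_csm :: "(exp \<Rightarrow> exp) \<Rightarrow> def list \<Rightarrow> name \<Rightarrow> dtr \<Rightarrow> def" where
  "dtr_to_csm tr ds D d = (case dtr_sig d of (f, xs, T) \<Rightarrow>
     DCsm f D xs T
       (concat (map (\<lambda>(C, ys, fs). concat (map (\<lambda>fd. case fd of FunDef g zs U e \<Rightarrow>
                 if g = f then [(PCtr C (map fst ys), subst_this_self (tr e))] else []) fs))
          (generators_of D ds))
        @ (case d of DtrDecl _ _ _ \<Rightarrow> [] | DtrDef _ _ _ e \<Rightarrow> [(PWild, subst_this_self (tr e))])))"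

definition ctr_funs :: "(exp \<Rightarrow> exp) \<Rightarrow> def list \<Rightarrow> name \<Rightarrow> name \<Rightarrow> fundef list" where
  "ctr_funs tr ds D C = concat (map (\<lambda>(f, xs, T, cls). concat (map (\<lambda>(p, e). case p of
        PCtr C' ys \<Rightarrow> if C' = C then [FunDef f xs T (subst_self_this (tr e))] else []
      | PWild \<Rightarrow> []) cls)) (consumers_of D ds))"

fun tr_dtr :: "(exp \<Rightarrow> exp) \<Rightarrow> dtr \<Rightarrow> dtr" where
  "tr_dtr tr (DtrDecl f xs T) = DtrDecl f xs T"
| "tr_dtr tr (DtrDef f xs T e) = DtrDef f xs T (tr e)"

fun tr_fun :: "(exp \<Rightarrow> exp) \<Rightarrow> fundef \<Rightarrow> fundef" where
  "tr_fun tr (FunDef f xs T e) = FunDef f xs T (tr e)"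

definition trans_def :: "name set \<Rightarrow> (exp \<Rightarrow> exp) \<Rightarrow> def list \<Rightarrow> def \<Rightarrow> def list" where
  "trans_def S tr ds d = (let \<Delta> = collect S ds in case d of
     DData D \<Rightarrow> if D \<in> Dt \<Delta>
                 then [DIface D (map (csm_to_dtr tr) (consumers_of D ds))]      \<comment> \<open>Dt2It\<close>
                 else [DData D]
   | DIface D dts \<Rightarrow> if D \<in> It \<Delta>
                 then DData D # map (dtr_to_csm tr ds D) dts                    \<comment> \<open>It2Dt\<close>
                 else [DIface D (map (tr_dtr tr) dts)]
   | DCtr C xs D \<Rightarrow> if D \<in> Dt \<Delta>
                 then [DGen C xs D (ctr_funs tr ds D C)]                        \<comment> \<open>Ctr2Gen\<close>
                 else [DCtr C xs D]
   | DGen C xs D fs \<Rightarrow> if D \<in> It \<Delta>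
                 then [DCtr C xs D]                                             \<comment> \<open>Gen2Ctr\<close>
                 else [DGen C xs D (map (tr_fun tr) fs)]
   | DCsm f D xs T cls \<Rightarrow> if D \<in> Dt \<Delta>
                 then []                                                        \<comment> \<open>CsmElim\<close>
                 else [DCsm f D xs T (map (\<lambda>(p, e). (p, tr e)) cls)])"

definition translate :: "name set \<Rightarrow> (exp \<Rightarrow> exp) \<Rightarrow> prog \<Rightarrow> prog" where
  "translate S tr P = (concat (map (trans_def S tr (fst P)) (fst P)), tr (snd P))"

end

theory Submission
  imports Defs
begin

lemma set_consumers_of:
  "set (consumers_of D ds) = {(f,xs,T,cls). DCsm f D xs T cls \<in> set ds}"
  by (induction ds) (auto simp: consumers_of_def split: def.splits if_splits)

lemma sig_csm_to_dtr: "dtr_sig (csm_to_dtr tr (f,xs,T,cls)) = (f,xs,T)"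
  by (auto simp: csm_to_dtr_def split: list.splits)

lemma dtr_to_csm_form:
  "\<exists>cls. dtr_to_csm tr ds D d = DCsm (fst (dtr_sig d)) D (fst (snd (dtr_sig d))) (snd (snd (dtr_sig d))) cls"
  by (cases d) (auto simp: dtr_to_csm_def)

lemma mem_trans:
  "x \<in> set (concat (map (trans_def S tr ds) ds)) \<longleftrightarrow> (\<exists>d\<in>set ds. x \<in> set (trans_def S tr ds d))"
  by auto

lemma DData_tr: "DData D \<in> set (trans_def S tr ds d) \<longleftrightarrow>
   (d = DData D \<and> D \<notin> Dt (collect S ds)) \<or> (\<exists>dts. d = DIface D dts \<and> D \<in> It (collect S ds))"
  by (cases d) (auto simp: trans_def_def Let_def dtr_to_csm_def split: prod.splits)

lemma DIface_tr: "DIface D dts' \<in> set (trans_def S tr ds d) \<longleftrightarrow>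
   (d = DData D \<and> D \<in> Dt (collect S ds) \<and> dts' = map (csm_to_dtr tr) (consumers_of D ds)) \<or>
   (\<exists>dts. d = DIface D dts \<and> D \<notin> It (collect S ds) \<and> dts' = map (tr_dtr tr) dts)"
  by (cases d) (auto simp: trans_def_def Let_def dtr_to_csm_def split: prod.splits)

lemma DCtr_tr: "DCtr C xs D \<in> set (trans_def S tr ds d) \<longleftrightarrow>
   (d = DCtr C xs D \<and> D \<notin> Dt (collect S ds)) \<or> (\<exists>fs. d = DGen C xs D fs \<and> D \<in> It (collect S ds))"
  by (cases d) (auto simp: trans_def_def Let_def dtr_to_csm_def split: prod.splits)

lemma DGen_tr: "DGen C xs D fs' \<in> set (trans_def S tr ds d) \<longleftrightarrow>
   (d = DCtr C xs D \<and> D \<in> Dt (collect S ds) \<and> fs' = ctr_funs tr ds D C) \<or>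
   (\<exists>fs. d = DGen C xs D fs \<and> D \<notin> It (collect S ds) \<and> fs' = map (tr_fun tr) fs)"
  by (cases d) (auto simp: trans_def_def Let_def dtr_to_csm_def split: prod.splits)

lemma dtr_to_csm_iff: "(\<exists>c. dtr_to_csm tr ds D' d = DCsm f D xs T c) \<longleftrightarrow> D' = D \<and> dtr_sig d = (f,xs,T)"
  by (cases d) (auto simp: dtr_to_csm_def)

lemma DCsm_tr: "(\<exists>cls'. DCsm f D xs T cls' \<in> set (trans_def S tr ds d)) \<longleftrightarrow>
   (\<exists>dts. d = DIface D dts \<and> D \<in> It (collect S ds) \<and> (f,xs,T) \<in> dtr_sig ` set dts) \<or>
   (\<exists>cls. d = DCsm f D xs T cls \<and> D \<notin> Dt (collect S ds))"
proof (cases d)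
  case (DIface D' dts)
  show ?thesis
  proof
    assume "\<exists>cls'. DCsm f D xs T cls' \<in> set (trans_def S tr ds d)"
    then obtain cls' where "DCsm f D xs T cls' \<in> set (trans_def S tr ds d)" by blast
    then have "D' \<in> It (collect S ds)" "\<exists>dd\<in>set dts. dtr_to_csm tr ds D' dd = DCsm f D xs T cls'"
      using DIface by (auto simp: trans_def_def Let_def split: if_splits)
    then show "(\<exists>dts. d = DIface D dts \<and> D \<in> It (collect S ds) \<and> (f,xs,T) \<in> dtr_sig ` set dts) \<or>
   (\<exists>cls. d = DCsm f D xs T cls \<and> D \<notin> Dt (collect S ds))"
      using DIface dtr_to_csm_iff by (metis image_eqI)
  next
    assume "(\<exists>dts. d = DIface D dts \<and> D \<in> It (collect S ds) \<and> (f,xs,T) \<in> dtr_sig ` set dts) \<or>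
   (\<exists>cls. d = DCsm f D xs T cls \<and> D \<notin> Dt (collect S ds))"
    then have "D' = D" "D \<in> It (collect S ds)" "(f,xs,T) \<in> dtr_sig ` set dts" using DIface by auto
    then obtain dd where dd: "dd \<in> set dts" "dtr_sig dd = (f,xs,T)" by force
    then obtain c where "dtr_to_csm tr ds D dd = DCsm f D xs T c" using dtr_to_csm_iff by metis
    then show "\<exists>cls'. DCsm f D xs T cls' \<in> set (trans_def S tr ds d)"
      using DIface \<open>D' = D\<close> \<open>D \<in> It (collect S ds)\<close> dd
      by (auto simp: trans_def_def Let_def intro!: exI[of _ c] image_eqI[of _ _ dd])
  qed
qed (auto simp: trans_def_def Let_def)

theorem lemmaB5:
  fixes S :: "name set" and tr :: "exp \<Rightarrow> exp" and P P' :: prog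
  assumes wf: "wf_defs (fst P)"
    and trans: "P' = translate S tr P"
  defines "\<Delta> \<equiv> collect S (fst P)" and "\<Delta>' \<equiv> collect S (fst P')"
  shows "It \<Delta> = Dt \<Delta>' \<and> Dt \<Delta> = It \<Delta>'
       \<and> (\<forall>D \<in> It \<Delta>. Dtr \<Delta> D = Csm \<Delta>' D \<and> Gen \<Delta> D = Ctr \<Delta>' D)
       \<and> (\<forall>D \<in> Dt \<Delta>. Csm \<Delta> D = Dtr \<Delta>' D \<and> Ctr \<Delta> D = Gen \<Delta>' D)"
proof -
  obtain ds e where P: "P = (ds, e)" by (cases P)
  have wf': "wf_defs ds" using wf P by simp
  have ds': "fst P' = concat (map (trans_def S tr ds) ds)"
    using trans P by (simp add: translate_def)
  note W = wf'[unfolded wf_defs_def]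
  have 1: "It \<Delta> = Dt \<Delta>'"
    unfolding \<Delta>_def \<Delta>'_def ds' P using W
    by (auto simp: collect_def mem_trans DData_tr)
  have 2: "Dt \<Delta> = It \<Delta>'"
    unfolding \<Delta>_def \<Delta>'_def ds' P using W
    by (auto simp: collect_def mem_trans DIface_tr)
  have 3: "Dtr \<Delta> D = Csm \<Delta>' D" if "D \<in> It \<Delta>" for D
  proof -
    have DS: "D \<in> S" "D \<in> It (collect S ds)" using that unfolding \<Delta>_def P by (auto simp: collect_def)
    have ndt: "D \<notin> Dt (collect S ds)" using DS W by (auto simp: collect_def)
    have "(f,xs,T) \<in> Csm \<Delta>' D \<longleftrightarrow> (f,xs,T) \<in> Dtr \<Delta> D" for f xs T
    proof -
      have nc: "DCsm f D xs T cls \<notin> set ds" for cls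
        using W ndt DS(1) unfolding collect_def by simp blast
      have "(f,xs,T) \<in> Csm \<Delta>' D \<longleftrightarrow> (\<exists>x\<in>set ds. \<exists>cls. DCsm f D xs T cls \<in> set (trans_def S tr ds x))"
        unfolding \<Delta>'_def ds' using DS by (auto simp: collect_def)
      also have "\<dots> \<longleftrightarrow> (\<exists>dts. DIface D dts \<in> set ds \<and> (f,xs,T) \<in> dtr_sig ` set dts)"
        unfolding DCsm_tr using DS ndt nc by auto
      also have "\<dots> \<longleftrightarrow> (f,xs,T) \<in> Dtr \<Delta> D"
        unfolding \<Delta>_def P using DS by (auto simp: collect_def image_iff)
      finally show ?thesis .
    qed
    then show ?thesis by auto
  qed
  have 4: "Gen \<Delta> D = Ctr \<Delta>' D" if "D \<in> It \<Delta>" for D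
    using that unfolding \<Delta>_def \<Delta>'_def ds' P using W
    by (auto simp: collect_def mem_trans DCtr_tr)
  have 5: "Csm \<Delta> D = Dtr \<Delta>' D" if "D \<in> Dt \<Delta>" for D
  proof -
    have DS: "D \<in> S" "DData D \<in> set ds" "D \<in> Dt (collect S ds)" using that unfolding \<Delta>_def P by (auto simp: collect_def)
    have ni: "DIface D dts \<notin> set ds" for dts using W DS by blast
    have "DIface D dts \<in> set (fst P') \<longleftrightarrow> dts = map (csm_to_dtr tr) (consumers_of D ds)" for dts
      unfolding ds' mem_trans DIface_tr using DS ni by auto
    then have "Dtr \<Delta>' D = dtr_sig ` set (map (csm_to_dtr tr) (consumers_of D ds))"
      unfolding \<Delta>'_def using DS(1) by (auto simp: collect_def)
    also have "\<dots> = Csm \<Delta> D"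
      unfolding \<Delta>_def P using DS(1)
      by (force simp: collect_def set_consumers_of sig_csm_to_dtr image_iff)
    finally show ?thesis by simp
  qed
  have 6: "Ctr \<Delta> D = Gen \<Delta>' D" if "D \<in> Dt \<Delta>" for D
    using that unfolding \<Delta>_def \<Delta>'_def ds' P using W
    by (auto simp: collect_def mem_trans DGen_tr) blast
  show ?thesis using 1 2 3 4 5 6 by blast
qed

end
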